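(* Let $G=(V,w,m)$ be a locally finite measured weighted graph with $D:=\operatorname{Deg}_{\max}<\infty$, $q:=q_{\min}>0$ and $\kappa(x,y)\ge0$ for all $x\ne y\in V$. Let $f:V\to\mathbb{R}$ be harmonic ($\Delta f=0$) with $\|\nabla f\|_\infty=1$. Let $\varepsilon\in(0,q/(4D))$ and let $x_0\neq y_0$ satisfy $f(x_0)-f(y_0)\ge d(x_0,y_0)-\varepsilon$. Then there exist $x'\in B_1(x_0)$ and $y'\in B_1(y_0)$ such that $$f(x')-f(y')>d(x',y')-\varepsilon\cdot\frac{10D}{q}\qquad\text{and}\qquad d(x',y')>d(x_0,y_0).$$
   Context: A measured weighted graph $G=(V,w,m)$: countable $V$, symmetric $w:V\times V\to[0,\infty)$ vanishing on the diagonal, $m:V\to(0,\infty)$; $x\sim y$ iff $w(x,y)>0$; locally finite means each vertex has finitely many neighbours. $q(x,y):=w(x,y)/m(x)$, $\Delta f(x):=\sum_y q(x,y)(f(y)-f(x))$, $\operatorname{Deg}_{\max}:=\sup_x\sum_y q(x,y)$, $q_{\min}:=\inf_{x\sim y}q(x,y)$. $d$ is the combinatorial graph distance and $B_1(x)=\{z:d(x,z)\le1\}$. For $x\ne y$, $\nabla_{xy}f:=(f(x)-f(y))/d(x,y)$, $\|\nabla f\|_\infty:=\sup_{x\sim y}\nabla_{xy}f$, and the Ollivier curvature is $\kappa(x,y):=\inf\{\nabla_{xy}\Delta f: \nabla_{yx}f=1,\ \|\nabla f\|_\infty=1\}$. *)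

theory Defs
  imports Complex_Main "HOL-Library.Extended_Real" "HOL-Library.Countable"
begin

definition weighted_graph :: "('a \<Rightarrow> 'a \<Rightarrow> real) \<Rightarrow> ('a \<Rightarrow> real) \<Rightarrow> bool" where
  "weighted_graph w m \<longleftrightarrow>
     (\<forall>x y. w x y = w y x) \<and> (\<forall>x y. 0 \<le> w x y) \<and> (\<forall>x. w x x = 0) \<and> (\<forall>x. 0 < m x)"

definition locally_finite :: "('a \<Rightarrow> 'a \<Rightarrow> real) \<Rightarrow> bool" where
  "locally_finite w \<longleftrightarrow> (\<forall>x. finite {y. 0 < w x y})"

definition qrate :: "('a \<Rightarrow> 'a \<Rightarrow> real) \<Rightarrow> ('a \<Rightarrow> real) \<Rightarrow> 'a \<Rightarrow> 'a \<Rightarrow> real" where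
  "qrate w m x y = w x y / m x"

definition laplacian :: "('a \<Rightarrow> 'a \<Rightarrow> real) \<Rightarrow> ('a \<Rightarrow> real) \<Rightarrow> ('a \<Rightarrow> real) \<Rightarrow> 'a \<Rightarrow> real" where
  "laplacian w m f x = (\<Sum>y\<in>{y. 0 < w x y}. qrate w m x y * (f y - f x))"

definition deg_max :: "('a \<Rightarrow> 'a \<Rightarrow> real) \<Rightarrow> ('a \<Rightarrow> real) \<Rightarrow> ereal" where
  "deg_max w m = (SUP x. ereal (\<Sum>y\<in>{y. 0 < w x y}. qrate w m x y))"

definition q_min :: "('a \<Rightarrow> 'a \<Rightarrow> real) \<Rightarrow> ('a \<Rightarrow> real) \<Rightarrow> ereal" where
  "q_min w m = (INF p\<in>{(x,y). 0 < w x y}. ereal (qrate w m (fst p) (snd p)))"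

definition edges :: "('a \<Rightarrow> 'a \<Rightarrow> real) \<Rightarrow> ('a \<times> 'a) set" where
  "edges w = {(x,y). 0 < w x y}"

definition gdist :: "('a \<Rightarrow> 'a \<Rightarrow> real) \<Rightarrow> 'a \<Rightarrow> 'a \<Rightarrow> enat" where
  "gdist w x y = (INF n\<in>{n. (x,y) \<in> edges w ^^ n}. enat n)"

text \<open>Gradient nabla_{xy} f = (f x - f y)/d(x,y) (only meaningful for x \<noteq> y at finite distance).\<close>
definition grad :: "('a \<Rightarrow> 'a \<Rightarrow> real) \<Rightarrow> ('a \<Rightarrow> real) \<Rightarrow> 'a \<Rightarrow> 'a \<Rightarrow> real" where
  "grad w f x y = (f x - f y) / real (the_enat (gdist w x y))"

definition grad_sup :: "('a \<Rightarrow> 'a \<Rightarrow> real) \<Rightarrow> ('a \<Rightarrow> real) \<Rightarrow> ereal" where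
  "grad_sup w f = (SUP p\<in>{(x,y). 0 < w x y}. ereal (grad w f (fst p) (snd p)))"

text \<open>Ollivier curvature kappa(x,y) = inf { nabla_{xy} Delta f : nabla_{yx} f = 1, |nabla f|_inf = 1 },
  as an extended real (inf of the empty set is +infinity). The condition nabla_{yx} f = 1
  includes finiteness of d(x,y).\<close>
definition ollivier :: "('a \<Rightarrow> 'a \<Rightarrow> real) \<Rightarrow> ('a \<Rightarrow> real) \<Rightarrow> 'a \<Rightarrow> 'a \<Rightarrow> ereal" where
  "ollivier w m x y = (INF f\<in>{f. gdist w y x \<noteq> \<infinity> \<and> grad w f y x = 1 \<and> grad_sup w f = 1}.
       ereal (grad w (laplacian w m f) x y))"

end

theory Submission
  imports Defs
begin


lemma relpow_edges_sym:
  assumes sym: "\<And>x y. w x y = w y x"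
  shows "(a,b) \<in> edges w ^^ k \<Longrightarrow> (b,a) \<in> edges w ^^ k"
proof (induction k arbitrary: a b)
  case 0 then show ?case by simp
next
  case (Suc k)
  from Suc.prems obtain c where ac: "(a,c) \<in> edges w ^^ k" and cb: "(c,b) \<in> edges w"
    by (rule relpow_Suc_E)
  have "(b,c) \<in> edges w" using cb sym by (simp add: edges_def)
  moreover have "(c,a) \<in> edges w ^^ k" using Suc.IH ac by blast
  ultimately show ?case by (rule relpow_Suc_I2)
qed

lemma gdist_le: "(a,b) \<in> edges w ^^ k \<Longrightarrow> gdist w a b \<le> enat k"
  unfolding gdist_def by (rule INF_lower2[of k]) auto

lemma gdist_fin_path:
  assumes "gdist w a b = enat k"
  shows "(a,b) \<in> edges w ^^ k"
proof -
  let ?N = "{n. (a,b) \<in> edges w ^^ n}"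
  have ne: "?N \<noteq> {}"
  proof
    assume "?N = {}"
    then have "gdist w a b = \<infinity>" unfolding gdist_def by (simp add: top_enat_def)
    with assms show False by simp
  qed
  define l where "l = (LEAST n. n \<in> ?N)"
  have lN: "l \<in> ?N" using ne unfolding l_def by (metis LeastI_ex ex_in_conv)
  have "gdist w a b = enat l"
  proof (rule antisym)
    show "gdist w a b \<le> enat l" using lN by (intro gdist_le) simp
    show "enat l \<le> gdist w a b" unfolding gdist_def
      by (rule INF_greatest) (auto simp: l_def intro: Least_le)
  qed
  with assms lN show ?thesis by simp
qed

lemma gdist_sym: assumes "\<And>x y. w x y = w y x" shows "gdist w a b = gdist w b a"
proof -
  have "{n. (a,b) \<in> edges w ^^ n} = {n. (b,a) \<in> edges w ^^ n}"
    using relpow_edges_sym[of w, OF assms] by blast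
  then show ?thesis unfolding gdist_def by simp
qed

lemma gdist_tri:
  assumes "gdist w a b = enat i" "gdist w b c = enat j"
  shows "gdist w a c \<le> enat (i + j)"
proof -
  have "(a,b) \<in> edges w ^^ i" "(b,c) \<in> edges w ^^ j" using gdist_fin_path[OF assms(1)] gdist_fin_path[OF assms(2)] by auto
  then have "(a,c) \<in> edges w ^^ (i + j)" by (auto simp: relpow_add)
  then show ?thesis by (rule gdist_le)
qed

lemma enat_le_fin: "(x::enat) \<le> enat k \<Longrightarrow> \<exists>j. x = enat j \<and> j \<le> k"
  by (cases x) auto

lemma path_lip:
  assumes "\<And>a b. 0 < w a b \<Longrightarrow> h a - h b \<le> (1::real)"
  shows "(a,b) \<in> edges w ^^ k \<Longrightarrow> h a - h b \<le> real k"
proof (induction k arbitrary: b)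
  case 0 then show ?case by simp
next
  case (Suc k)
  from Suc.prems obtain c where "(a,c) \<in> edges w ^^ k" "(c,b) \<in> edges w" by (rule relpow_Suc_E)
  then have "h a - h c \<le> real k" "h c - h b \<le> 1" using Suc.IH assms by (auto simp: edges_def)
  then show ?case by simp
qed

lemma dist_lip:
  assumes "\<And>a b. 0 < w a b \<Longrightarrow> h a - h b \<le> (1::real)" "gdist w a b = enat k"
  shows "h a - h b \<le> real k"
  using path_lip[OF assms(1) gdist_fin_path[OF assms(2)]] .

lemma gdist_refl: "gdist w a a = enat 0"
proof -
  have "gdist w a a \<le> enat 0" by (rule gdist_le) simp
  then show ?thesis by (simp add: zero_enat_def[symmetric])
qed

lemma gdist_zero: "gdist w a b = enat 0 \<Longrightarrow> a = b"
  using gdist_fin_path[of w a b 0] by simp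

lemma gdist_edge: assumes "weighted_graph w m" "0 < w a b" shows "gdist w a b = enat 1"
proof -
  have "(a,b) \<in> edges w ^^ 1" using assms(2) by (simp add: edges_def)
  then have le: "gdist w a b \<le> enat 1" by (rule gdist_le)
  then obtain j where j: "gdist w a b = enat j" "j \<le> 1" using enat_le_fin by blast
  have "a \<noteq> b" using assms unfolding weighted_graph_def by auto
  then have "j \<noteq> 0" using j gdist_zero[of w a b] by auto
  with j show ?thesis by auto
qed

lemma edge_dist_shift:
  assumes G: "weighted_graph w m" and e: "0 < w a b"
  shows "real (the_enat (gdist w a c)) \<le> real (the_enat (gdist w b c)) + 1"
proof (cases "gdist w b c")
  case (enat j)
  have "gdist w a c \<le> enat (1 + j)" using gdist_tri[OF gdist_edge[OF G e] enat] .
  then obtain k where "gdist w a c = enat k" "k \<le> 1 + j" using enat_le_fin by blast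
  then show ?thesis using enat by simp
next
  case infinity
  have sym: "\<And>x y. w x y = w y x" using G unfolding weighted_graph_def by auto
  have "gdist w a c = \<infinity>"
  proof (rule ccontr)
    assume "gdist w a c \<noteq> \<infinity>"
    then obtain k where k: "gdist w a c = enat k" by auto
    have "0 < w b a" using e sym by simp
    have "gdist w b c \<le> enat (1 + k)" using gdist_tri[OF gdist_edge[OF G \<open>0 < w b a\<close>] k] .
    with infinity show False by simp
  qed
  with infinity show ?thesis by simp
qed



lemma arF2:
  fixes K lam E \<delta> n D0 fx0 fy0 fy :: real
  assumes lK: "lam * (K - 1) = 1" and KE: "K * E = 4" and K1: "1 < K"
    and dd: "\<delta> = n - (fx0 - fy0)" and D0: "D0 \<le> n + 1"
    and Hc: "n < D0 \<Longrightarrow> fx0 - fy \<le> D0 - E" and L: "fx0 - fy \<le> D0"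
  shows "fx0 + \<delta> \<le> D0 + (fy + lam * (fy - fy0 + K * \<delta>))"
proof -
  have key: "0 \<le> (K-1)*(D0 - n) + K*(fy - fy0 + \<delta>)"
  proof (cases "n < D0")
    case True
    have "n - D0 + E \<le> fy - fy0 + \<delta>" using Hc[OF True] dd by simp
    then have h: "K*(n - D0 + E) \<le> K*(fy - fy0 + \<delta>)" using K1 by (intro mult_left_mono) auto
    have "K*(n - D0 + E) = K*n - K*D0 + 4" using KE by (simp add: algebra_simps)
    moreover have "(K-1)*(D0 - n) = K*D0 - K*n - D0 + n" by (simp add: algebra_simps)
    ultimately show ?thesis using h D0 by linarith
  next
    case False
    then have c: "D0 \<le> n" by simp
    have "n - D0 \<le> fy - fy0 + \<delta>" using L dd by simp
    then have h: "K*(n - D0) \<le> K*(fy - fy0 + \<delta>)" using K1 by (intro mult_left_mono) auto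
    have e1: "K*(n - D0) = K*n - K*D0" by (simp add: algebra_simps)
    have e2: "(K-1)*(D0 - n) = K*D0 - K*n - D0 + n" by (simp add: algebra_simps)
    from h have h': "K*n - K*D0 \<le> K*(fy - fy0 + \<delta>)" by (simp only: e1)
    show ?thesis unfolding e2 using h' c by linarith
  qed
  have lKK: "lam * K = 1 + lam" using lK by (simp add: algebra_simps)
  have "D0 + (fy + lam * (fy - fy0 + K * \<delta>)) - (fx0 + \<delta>) = lam * ((K-1)*(D0 - n) + K*(fy - fy0 + \<delta>))"
  proof -
    have "lam * ((K-1)*(D0 - n) + K*(fy - fy0 + \<delta>)) = (lam*(K-1))*(D0 - n) + (lam*K)*(fy - fy0 + \<delta>)"
      by (simp add: algebra_simps)
    also have "\<dots> = (D0 - n) + (1 + lam)*(fy - fy0 + \<delta>)" using lK lKK by simp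
    also have "\<dots> = D0 + (fy + lam * (fy - fy0 + K * \<delta>)) - (fx0 + \<delta>)"
    proof -
      have "lam * (fy - fy0 + K * \<delta>) = lam*(fy - fy0) + (lam*K)*\<delta>" by (simp add: algebra_simps)
      then have t: "lam * (fy - fy0 + K * \<delta>) = lam*(fy - fy0) + (1+lam)*\<delta>" by (simp only: lKK)
      show ?thesis unfolding t using dd by (simp add: algebra_simps)
    qed
    finally show ?thesis by simp
  qed
  moreover have "0 \<le> lam" using lK K1 by (metis less_eq_real_def mult_pos_pos zero_less_one linorder_not_le mult_nonpos_nonneg diff_gt_0_iff_gt)
  ultimately show ?thesis using key by (metis diff_ge_0_iff_ge mult_nonneg_nonneg)
qed

lemma arF1:
  fixes K lam E \<delta> n D0 fx0 fy0 fy :: real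
  assumes lK: "lam * (K - 1) = 1" and KE: "K * E = 4" and K1: "1 < K"
    and dd: "\<delta> = n - (fx0 - fy0)" and D0: "D0 \<le> n + 1"
    and Hc: "n < D0 \<Longrightarrow> fx0 - fy \<le> D0 - E" and L: "fx0 - fy \<le> D0" and E1: "E < 4"
  shows "fy0 \<le> 1 + (fy + lam * (fy - fy0 + K * \<delta>))"
proof -
  have lKK: "lam * K = 1 + lam" using lK by (simp add: algebra_simps)
  have lpos: "0 < lam" using lK K1 by (metis diff_gt_0_iff_gt mult_pos_pos zero_less_mult_pos2 zero_less_one)
  have key: "lam \<le> (1 + lam) * (1 + (fy - fy0) + \<delta>)"
  proof (cases "n < D0")
    case True
    have "E \<le> 1 + (fy - fy0) + \<delta>" using Hc[OF True] dd D0 by simp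
    then have "(1 + lam) * E \<le> (1 + lam) * (1 + (fy - fy0) + \<delta>)" using lpos by (intro mult_left_mono) auto
    moreover have "(1 + lam) * E = 4 * lam"
    proof -
      have "(1 + lam) * E = lam * (K * E)" by (simp only: lKK[symmetric] mult.assoc)
      then show ?thesis using KE by simp
    qed
    ultimately show ?thesis using lpos by linarith
  next
    case False
    have "1 \<le> 1 + (fy - fy0) + \<delta>" using L dd False by simp
    then have "(1 + lam) * 1 \<le> (1 + lam) * (1 + (fy - fy0) + \<delta>)" using lpos by (intro mult_left_mono) auto
    then show ?thesis by simp
  qed
  have "lam * (fy - fy0 + K * \<delta>) = lam*(fy - fy0) + (lam*K)*\<delta>" by (simp add: algebra_simps)
  then have t: "lam * (fy - fy0 + K * \<delta>) = lam*(fy - fy0) + (1+lam)*\<delta>" by (simp only: lKK)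
  have "(1 + lam) * (1 + (fy - fy0) + \<delta>) = 1 + (fy - fy0) + \<delta> + lam + lam*(fy - fy0) + lam * \<delta>"
    by (simp add: algebra_simps)
  then show ?thesis unfolding t using key by (simp add: algebra_simps)
qed

lemma arP0:
  fixes K E n D' fx fy :: real
  assumes KE: "K * E = 4" and K1: "1 < K" and D': "D' \<le> n + 2"
    and Hc: "n < D' \<Longrightarrow> fx - fy \<le> D' - E" and L: "fx - fy \<le> D'"
  shows "0 \<le> K * (D' - fx + fy) - (D' - n)"
proof (cases "n < D'")
  case True
  have "E \<le> D' - fx + fy" using Hc[OF True] by simp
  then have "K * E \<le> K * (D' - fx + fy)" using K1 by (intro mult_left_mono) auto
  then show ?thesis using KE D' by linarith
next
  case False
  have "0 \<le> K * (D' - fx + fy)" using K1 L by simp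
  then show ?thesis using False by linarith
qed

lemma arP1:
  fixes K E \<delta> n D' D0 fx fy fx0 fy0 :: real
  assumes KE: "K * E = 4" and K1: "1 < K" and E52: "E < 5/2" and E10: "10 * \<delta> \<le> E"
    and d0: "0 \<le> \<delta>" and d4: "\<delta> < 1/4"
    and dd: "\<delta> = n - (fx0 - fy0)" and Dn: "D' = n \<or> D' + 1 \<le> n"
    and L: "fx - fy \<le> D'" and fx: "fx \<le> fy0 + n - 1"
    and D0: "D0 \<le> n + 1" and Hc: "n < D0 \<Longrightarrow> fx0 - fy \<le> D0 - E" and L0: "fx0 - fy \<le> D0"
  shows "1 \<le> K * (D' - fx + fy) - (D' - n)"
proof (cases "D' = n")
  case False
  then have "D' + 1 \<le> n" using Dn by simp
  moreover have "0 \<le> K * (D' - fx + fy)" using K1 L by simp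
  ultimately show ?thesis by linarith
next
  case True
  have Kpos: "0 < K" using K1 by simp
  show ?thesis
  proof (cases "n < D0")
    case c: True
    have s: "E - \<delta> \<le> D' - fx + fy" using Hc[OF c] D0 dd fx True by simp
    have "K * (E - \<delta>) \<le> K * (D' - fx + fy)" using Kpos s by (intro mult_left_mono) auto
    moreover have "K * (10 * \<delta>) \<le> K * E" using Kpos E10 by (intro mult_left_mono) auto
    moreover have "K * (E - \<delta>) = K * E - K * \<delta>" by (simp add: algebra_simps)
    ultimately show ?thesis using KE True by simp
  next
    case c: False
    have s: "1 - \<delta> \<le> D' - fx + fy" using L0 c dd fx True by simp
    have k1: "K * (1 - \<delta>) \<le> K * (D' - fx + fy)" using Kpos s by (intro mult_left_mono) auto
    have "K * (5/2) > K * E" using Kpos E52 by simp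
    then have k3: "8/5 < K" using KE by linarith
    have k2: "K * (1 - \<delta>) \<ge> K * (3/4)" using Kpos d4 by (intro mult_left_mono) auto
    have "1 < K * (3/4)" using k3 by linarith
    then show ?thesis using k1 k2 True by linarith
  qed
qed

lemma arF3:
  fixes K lam \<delta> n D' fx fy fx0 fy0 c ind :: real
  assumes lK: "lam * (K - 1) = 1" and K1: "1 < K"
    and dd: "\<delta> = n - (fx0 - fy0)" and c: "0 \<le> c"
    and P: "ind \<le> K * (D' - fx + fy) - (D' - n)"
  shows "fx + \<delta> + lam * (ind + (fx - fx0) - K * \<delta>) \<le> D' + (fy + lam * (fy - fy0 + c))"
proof -
  have lKK: "lam * K = 1 + lam" using lK by (simp add: algebra_simps)
  have lpos: "0 < lam" using lK K1 by (metis diff_gt_0_iff_gt mult_pos_pos zero_less_mult_pos2 zero_less_one)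
  have "0 \<le> lam * (K * (D' - fx + fy) - (D' - n) + c - ind)" using lpos P c by simp
  moreover have "lam * (K * (D' - fx + fy) - (D' - n) + c - ind) =
     D' + (fy + lam * (fy - fy0 + c)) - (fx + \<delta> + lam * (ind + (fx - fx0) - K * \<delta>))"
  proof -
    have a: "lam * (K * (D' - fx + fy) - (D' - n) + c - ind) = (lam * K) * (D' - fx + fy) - lam * (D' - n) + lam * c - lam * ind"
      by (simp add: algebra_simps)
    have b: "lam * (ind + (fx - fx0) - K * \<delta>) = lam * (ind + (fx - fx0)) - (lam * K) * \<delta>"
      by (simp add: algebra_simps)
    have nn: "n = \<delta> + fx0 - fy0" using dd by simp
    show ?thesis unfolding a b lKK unfolding nn by (simp add: algebra_simps)
  qed
  ultimately show ?thesis by simp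
qed



theorem lemma2p3:
  fixes w :: "'a::countable \<Rightarrow> 'a \<Rightarrow> real" and m :: "'a \<Rightarrow> real" and f :: "'a \<Rightarrow> real"
    and D q \<epsilon> :: real and x0 y0 :: 'a
  assumes G: "weighted_graph w m" and lf: "locally_finite w"
    and D: "deg_max w m = ereal D" and q: "q_min w m = ereal q" and qpos: "q > 0"
    and curv: "\<forall>x y. x \<noteq> y \<longrightarrow> ollivier w m x y \<ge> 0"
    and harm: "\<forall>x. laplacian w m f x = 0"
    and lip: "grad_sup w f = 1"
    and eps: "0 < \<epsilon>" "\<epsilon> < q / (4 * D)"
    and xy: "x0 \<noteq> y0"
    and near: "ereal (f x0 - f y0) \<ge> ereal_of_enat (gdist w x0 y0) - ereal \<epsilon>"
  shows "\<exists>x' y'. gdist w x0 x' \<le> 1 \<and> gdist w y0 y' \<le> 1 \<and>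
           ereal (f x' - f y') > ereal_of_enat (gdist w x' y') - ereal (\<epsilon> * (10 * D / q)) \<and>
           gdist w x' y' > gdist w x0 y0"
proof (rule ccontr)
  assume nc: "\<not> (\<exists>x' y'. gdist w x0 x' \<le> 1 \<and> gdist w y0 y' \<le> 1 \<and>
           ereal (f x' - f y') > ereal_of_enat (gdist w x' y') - ereal (\<epsilon> * (10 * D / q)) \<and>
           gdist w x' y' > gdist w x0 y0)"
  have sym: "\<And>x y. w x y = w y x" and wnn: "\<And>x y. 0 \<le> w x y" and mpos: "\<And>x. 0 < m x"
    using G unfolding weighted_graph_def by auto
  define E where "E = \<epsilon> * (10 * D / q)"
  obtain n where n: "gdist w x0 y0 = enat n"
  proof (cases "gdist w x0 y0")
    case (enat k) then show ?thesis using that by blast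
  next
    case infinity
    with near show ?thesis by simp
  qed
  have n0: "n \<noteq> 0" using n xy gdist_zero[of w x0 y0] by auto
  have nearR: "real n - \<epsilon> \<le> f x0 - f y0" using near n by simp
  have lipf: "f a - f b \<le> 1" if "0 < w a b" for a b
  proof -
    have "ereal (grad w f a b) \<le> grad_sup w f" unfolding grad_sup_def
      by (rule SUP_upper2[of "(a,b)"]) (use that in auto)
    then have "grad w f a b \<le> 1" using lip by simp
    then show ?thesis using gdist_edge[OF G that] by (simp add: grad_def)
  qed
  have fdist: "f a - f b \<le> real k" if "gdist w a b = enat k" for a b k
    using dist_lip[of w f, OF lipf that] by blast
  define \<delta> where "\<delta> = real n - (f x0 - f y0)"
  have dnn: "0 \<le> \<delta>" using fdist[OF n] unfolding \<delta>_def by simp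
  have de: "\<delta> \<le> \<epsilon>" using nearR unfolding \<delta>_def by simp
  obtain n1 where n1: "n = Suc n1" using n0 not0_implies_Suc by blast
  obtain x2 where x2e: "(x0, x2) \<in> edges w" and x2p: "(x2, y0) \<in> edges w ^^ n1"
    using gdist_fin_path[OF n] n1 by (metis relpow_Suc_D2)
  have wx2: "0 < w x0 x2" using x2e by (simp add: edges_def)
  obtain m2 where m2: "gdist w x2 y0 = enat m2" "m2 \<le> n1"
    using enat_le_fin gdist_le[OF x2p] by blast
  define deg where "deg x = (\<Sum>y\<in>{y. 0 < w x y}. qrate w m x y)" for x
  have qrnn: "0 \<le> qrate w m x y" for x y
    unfolding qrate_def using wnn mpos by (simp add: less_imp_le)
  have degD: "deg x \<le> D" for x
  proof -
    have "ereal (deg x) \<le> deg_max w m" unfolding deg_max_def deg_def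
      by (rule SUP_upper) simp
    then show ?thesis using D by simp
  qed
  have qx2: "q \<le> qrate w m x0 x2"
  proof -
    have "q_min w m \<le> ereal (qrate w m x0 x2)" unfolding q_min_def
      by (rule INF_lower2[of "(x0,x2)"]) (use wx2 in auto)
    then show ?thesis using q by simp
  qed
  have finN: "finite {y. 0 < w x y}" for x using lf unfolding locally_finite_def by blast
  have degx2: "qrate w m x0 x2 \<le> deg x0" unfolding deg_def
    by (rule member_le_sum) (use wx2 qrnn finN in auto)
  have qD: "q \<le> D" using qx2 degx2 degD[of x0] by linarith
  have Dpos: "0 < D" using qD qpos by linarith
  have Epos: "0 < E" unfolding E_def using eps qpos Dpos by simp
  have Elt: "E < 5/2"
  proof -
    have "E = \<epsilon> * (10 * D / q)" by (simp add: E_def)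
    also have "\<dots> < q / (4 * D) * (10 * D / q)"
      by (rule mult_strict_right_mono) (use eps qpos Dpos in auto)
    also have "\<dots> = 5/2" using qpos Dpos by (simp add: field_simps)
    finally show ?thesis .
  qed
  have E10: "10 * \<epsilon> \<le> E"
  proof -
    have "10 \<le> 10 * D / q" using qD qpos by (simp add: field_simps)
    then have "\<epsilon> * 10 \<le> \<epsilon> * (10 * D / q)" using eps by (intro mult_left_mono) auto
    then show ?thesis unfolding E_def by simp
  qed
  have dq: "\<delta> < 1/4"
  proof -
    have "q / (4 * D) \<le> 1/4" using qD qpos Dpos by (simp add: field_simps)
    then show ?thesis using de eps by linarith
  qed
  define K where "K = 4 / E"
  have KE: "K * E = 4" unfolding K_def using Epos by simp
  have K1: "1 < K" unfolding K_def using Epos Elt by (simp add: field_simps)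
  define lam where "lam = 1 / (K - 1)"
  have lpos: "0 < lam" unfolding lam_def using K1 by simp
  have lK: "lam * (K - 1) = 1" unfolding lam_def using K1 by simp
  have H: "f x' - f y' \<le> real k - E"
    if "gdist w x0 x' \<le> 1" "gdist w y0 y' \<le> 1" "gdist w x' y' = enat k" "n < k" for x' y' k
  proof -
    have "gdist w x' y' > gdist w x0 y0" using that n by simp
    then have "\<not> ereal (f x' - f y') > ereal_of_enat (gdist w x' y') - ereal E"
      using nc that unfolding E_def by blast
    then show ?thesis using that by simp
  qed
  have fx2: "f x2 \<le> f y0 + real n - 1" using fdist[OF m2(1)] m2(2) n1 by simp
  define B1 where "B1 = insert y0 {y. 0 < w y0 y}"
  have finB1: "finite B1" unfolding B1_def using finN by simp
  have dB1: "gdist w y0 y' = enat (if y' = y0 then 0 else 1)" if "y' \<in> B1" for y'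
    using that gdist_refl[of w y0] gdist_edge[OF G] unfolding B1_def by auto
  have D0: "\<exists>D0. gdist w x0 y' = enat D0 \<and> D0 \<le> n + 1" if "y' \<in> B1" for y'
  proof -
    have "gdist w x0 y' \<le> enat (n + (if y' = y0 then 0 else 1))" by (rule gdist_tri[OF n dB1[OF that]])
    then obtain j where "gdist w x0 y' = enat j" "j \<le> n + (if y' = y0 then 0 else 1)"
      using enat_le_fin by blast
    then show ?thesis by (intro exI[of _ j]) (auto split: if_splits)
  qed
  have Dx: "\<exists>D'. gdist w x' y' = enat D' \<and> D' \<le> n + 2" if a1: "0 < w x0 x'" and a2: "y' \<in> B1" for x' y'
  proof -
    obtain D0 where d0: "gdist w x0 y' = enat D0" "D0 \<le> n + 1" using D0[OF a2] by blast
    have "0 < w x' x0" using a1 sym by simp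
    have "gdist w x' y' \<le> enat (1 + D0)" by (rule gdist_tri[OF gdist_edge[OF G \<open>0 < w x' x0\<close>] d0(1)])
    then obtain j where "gdist w x' y' = enat j" "j \<le> 1 + D0" using enat_le_fin by blast
    then show ?thesis using d0(2) by (intro exI[of _ j]) auto
  qed
  have Dx2: "\<exists>D'. gdist w x2 y' = enat D' \<and> D' \<le> n" if "y' \<in> B1" for y'
  proof -
    have "gdist w x2 y' \<le> enat (m2 + (if y' = y0 then 0 else 1))" by (rule gdist_tri[OF m2(1) dB1[OF that]])
    then obtain j where "gdist w x2 y' = enat j" "j \<le> m2 + (if y' = y0 then 0 else 1)"
      using enat_le_fin by blast
    then show ?thesis using m2(2) n1 by (intro exI[of _ j]) (auto split: if_splits)
  qed
  have g01: "gdist w x0 x0 \<le> 1" using gdist_refl[of w x0] by (simp add: one_enat_def)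
  have gx1: "gdist w x0 x' \<le> 1" if "0 < w x0 x'" for x'
    using gdist_edge[OF G that] by (simp add: one_enat_def)
  have gy1: "gdist w y0 y' \<le> 1" if "y' \<in> B1" for y'
    using dB1[OF that] by (simp add: one_enat_def split: if_splits)
  define gy where "gy y' = f y' + lam * (f y' - f y0 + (if y' = y0 then 0 else K * \<delta>))" for y'
  define g where "g x = Min ((\<lambda>y'. real (the_enat (gdist w x y')) + gy y') ` B1)" for x
  have gyy0: "gy y0 = f y0" unfolding gy_def by simp
  have y0B: "y0 \<in> B1" unfolding B1_def by simp
  have E4: "E < 4" using Elt by simp
  have Kpos: "0 < K" using K1 by simp
  have Kd: "0 \<le> K * \<delta>" using Kpos dnn by simp
  have E10d: "10 * \<delta> \<le> E" using E10 de by linarith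
  have finS: "finite ((\<lambda>y'. real (the_enat (gdist w x y')) + gy y') ` B1)" for x
    using finB1 by simp
  have gx0: "g x0 = f x0 + \<delta>"
    unfolding g_def
  proof (rule Min_eqI[OF finS])
    fix s assume "s \<in> (\<lambda>y'. real (the_enat (gdist w x0 y')) + gy y') ` B1"
    then obtain y' where y': "y' \<in> B1" and s: "s = real (the_enat (gdist w x0 y')) + gy y'" by blast
    obtain D0 where d0: "gdist w x0 y' = enat D0" "D0 \<le> n+1" using D0[OF y'] by blast
    show "f x0 + \<delta> \<le> s"
    proof (cases "y' = y0")
      case True then show ?thesis using s n by (simp add: gyy0 \<delta>_def)
    next
      case False
      have "f x0 + \<delta> \<le> real D0 + (f y' + lam * (f y' - f y0 + K * \<delta>))"
        by (rule arF2[OF lK KE K1 \<delta>_def]) (use d0 fdist[OF d0(1)] H[OF g01 gy1[OF y'] d0(1)] in auto)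
      then show ?thesis using s d0 False by (simp add: gy_def)
    qed
  next
    show "f x0 + \<delta> \<in> (\<lambda>y'. real (the_enat (gdist w x0 y')) + gy y') ` B1"
      using y0B n by (intro image_eqI[of _ _ y0]) (simp_all add: gyy0 \<delta>_def)
  qed
  have gy0: "g y0 = f y0"
    unfolding g_def
  proof (rule Min_eqI[OF finS])
    fix s assume "s \<in> (\<lambda>y'. real (the_enat (gdist w y0 y')) + gy y') ` B1"
    then obtain y' where y': "y' \<in> B1" and s: "s = real (the_enat (gdist w y0 y')) + gy y'" by blast
    obtain D0 where d0: "gdist w x0 y' = enat D0" "D0 \<le> n+1" using D0[OF y'] by blast
    show "f y0 \<le> s"
    proof (cases "y' = y0")
      case True then show ?thesis using s gdist_refl[of w y0] by (simp add: gyy0)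
    next
      case False
      then have e1: "gdist w y0 y' = enat 1" using dB1[OF y'] by simp
      have "f y0 \<le> 1 + (f y' + lam * (f y' - f y0 + K * \<delta>))"
        by (rule arF1[OF lK KE K1 \<delta>_def]) (use d0 fdist[OF d0(1)] H[OF g01 gy1[OF y'] d0(1)] E4 in auto)
      then show ?thesis using s e1 False by (simp add: gy_def)
    qed
  next
    show "f y0 \<in> (\<lambda>y'. real (the_enat (gdist w y0 y')) + gy y') ` B1"
      using y0B gdist_refl[of w y0] by (intro image_eqI[of _ _ y0]) (simp_all add: gyy0)
  qed
  define ind where "ind x = (if x = x2 then 1 else (0::real))" for x
  have low: "f x' + \<delta> + lam * (ind x' + (f x' - f x0) - K * \<delta>) \<le> g x'" if wx: "0 < w x0 x'" for x'
    unfolding g_def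
  proof (rule Min.boundedI[OF finS])
    show "(\<lambda>y'. real (the_enat (gdist w x' y')) + gy y') ` B1 \<noteq> {}" using y0B by auto
    fix s assume "s \<in> (\<lambda>y'. real (the_enat (gdist w x' y')) + gy y') ` B1"
    then obtain y' where y': "y' \<in> B1" and s: "s = real (the_enat (gdist w x' y')) + gy y'" by blast
    obtain D' where dx: "gdist w x' y' = enat D'" "D' \<le> n+2" using Dx[OF wx y'] by blast
    have P: "ind x' \<le> K * (real D' - f x' + f y') - (real D' - real n)"
    proof (cases "x' = x2")
      case False
      have "0 \<le> K * (real D' - f x' + f y') - (real D' - real n)"
        by (rule arP0[OF KE K1]) (use dx fdist[OF dx(1)] H[OF gx1[OF wx] gy1[OF y'] dx(1)] in auto)
      then show ?thesis using False unfolding ind_def by simp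
    next
      case True
      obtain D2 where d2: "gdist w x2 y' = enat D2" "D2 \<le> n" using Dx2[OF y'] by blast
      have DD: "D' = D2" using d2 dx True by simp
      obtain D0 where d0: "gdist w x0 y' = enat D0" "D0 \<le> n+1" using D0[OF y'] by blast
      have "1 \<le> K * (real D' - f x' + f y') - (real D' - real n)"
        by (rule arP1[OF KE K1 Elt E10d dnn dq \<delta>_def])
          (use d2 DD True fx2 dx fdist[OF dx(1)] d0 fdist[OF d0(1)] H[OF g01 gy1[OF y'] d0(1)] in auto)
      then show ?thesis using True unfolding ind_def by simp
    qed
    have "f x' + \<delta> + lam * (ind x' + (f x' - f x0) - K * \<delta>)
        \<le> real D' + (f y' + lam * (f y' - f y0 + (if y' = y0 then 0 else K * \<delta>)))"
      by (rule arF3[OF lK K1 \<delta>_def _ P]) (use Kd in auto)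
    then show "f x' + \<delta> + lam * (ind x' + (f x' - f x0) - K * \<delta>) \<le> s" using s dx by (simp add: gy_def)
  qed
  have upy: "g y' \<le> gy y'" if "y' \<in> B1" for y'
  proof -
    have "g y' \<le> real (the_enat (gdist w y' y')) + gy y'" unfolding g_def using finS that by (intro Min_le) auto
    then show ?thesis using gdist_refl[of w y'] by simp
  qed
  have lipg: "g a - g b \<le> 1" if e: "0 < w a b" for a b
  proof -
    have "g b \<in> (\<lambda>y'. real (the_enat (gdist w b y')) + gy y') ` B1" unfolding g_def using finS y0B by (intro Min_in) auto
    then obtain y' where y': "y' \<in> B1" "g b = real (the_enat (gdist w b y')) + gy y'" by auto
    have "g a \<le> real (the_enat (gdist w a y')) + gy y'" unfolding g_def using finS y' by (intro Min_le) auto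
    moreover have "real (the_enat (gdist w a y')) \<le> real (the_enat (gdist w b y')) + 1" by (rule edge_dist_shift[OF G e])
    ultimately show ?thesis using y' by linarith
  qed
  have gradg: "grad w g x0 y0 = 1" unfolding grad_def using n gx0 gy0 n0 by (simp add: \<delta>_def)
  have gsup: "grad_sup w g = 1"
  proof (rule antisym)
    show "grad_sup w g \<le> 1" unfolding grad_sup_def
    proof (rule SUP_least)
      fix p assume "p \<in> {(x,y). 0 < w x y}"
      then obtain a b where p: "p = (a,b)" "0 < w a b" by auto
      show "ereal (grad w g (fst p) (snd p)) \<le> 1"
        using lipg[OF p(2)] gdist_edge[OF G p(2)] p by (simp add: grad_def)
    qed
  next
    have "g x2 - g y0 \<le> real m2" by (rule dist_lip[of w g, OF lipg m2(1)])
    then have "1 \<le> g x0 - g x2" using gx0 gy0 m2(2) n1 unfolding \<delta>_def by simp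
    then have "(1::ereal) \<le> ereal (grad w g x0 x2)" using gdist_edge[OF G wx2] by (simp add: grad_def)
    moreover have "ereal (grad w g x0 x2) \<le> grad_sup w g" unfolding grad_sup_def
      by (rule SUP_upper2[of "(x0,x2)"]) (use wx2 in auto)
    ultimately show "1 \<le> grad_sup w g" by (rule order_trans)
  qed
  have "ollivier w m y0 x0 \<le> ereal (grad w (laplacian w m g) y0 x0)"
    unfolding ollivier_def by (rule INF_lower) (use n gradg gsup in simp)
  moreover have "0 \<le> ollivier w m y0 x0" using curv xy by auto
  ultimately have "(0::ereal) \<le> ereal (grad w (laplacian w m g) y0 x0)" by (meson order_trans)
  then have "0 \<le> grad w (laplacian w m g) y0 x0" by simp
  moreover have "gdist w y0 x0 = enat n" using n gdist_sym[of w, OF sym] by metis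
  ultimately have curvg: "laplacian w m g x0 \<le> laplacian w m g y0"
    unfolding grad_def using n0 by (simp add: zero_le_divide_iff)
  have lapx: "lam * qrate w m x0 x2 - lam * K * \<delta> * deg x0 \<le> laplacian w m g x0"
  proof -
    let ?N = "{y. 0 < w x0 y}"
    have "(\<Sum>y\<in>?N. qrate w m x0 y * ((1 + lam) * (f y - f x0) + lam * ind y - lam * K * \<delta>))
        \<le> laplacian w m g x0"
      unfolding laplacian_def
    proof (rule sum_mono)
      fix y assume "y \<in> ?N"
      then have "f y + \<delta> + lam * (ind y + (f y - f x0) - K * \<delta>) \<le> g y" using low by simp
      then have "(1 + lam) * (f y - f x0) + lam * ind y - lam * K * \<delta> \<le> g y - g x0"
        using gx0 by (simp add: algebra_simps)
      then show "qrate w m x0 y * ((1 + lam) * (f y - f x0) + lam * ind y - lam * K * \<delta>)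
          \<le> qrate w m x0 y * (g y - g x0)" using qrnn by (intro mult_left_mono) auto
    qed
    moreover have "(\<Sum>y\<in>?N. qrate w m x0 y * ((1 + lam) * (f y - f x0) + lam * ind y - lam * K * \<delta>))
       = (1 + lam) * (\<Sum>y\<in>?N. qrate w m x0 y * (f y - f x0)) + lam * (\<Sum>y\<in>?N. qrate w m x0 y * ind y)
         - lam * K * \<delta> * (\<Sum>y\<in>?N. qrate w m x0 y)"
      by (simp add: sum.distrib sum_subtractf sum_distrib_left algebra_simps)
    moreover have "(\<Sum>y\<in>?N. qrate w m x0 y * (f y - f x0)) = 0"
      using harm unfolding laplacian_def by simp
    moreover have "(\<Sum>y\<in>?N. qrate w m x0 y * ind y) = qrate w m x0 x2"
    proof -
      have "(\<Sum>y\<in>?N. qrate w m x0 y * ind y) = (\<Sum>y\<in>?N. if y = x2 then qrate w m x0 y else 0)"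
        by (intro sum.cong) (auto simp: ind_def)
      also have "\<dots> = qrate w m x0 x2" using wx2 finN by simp
      finally show ?thesis .
    qed
    ultimately show ?thesis unfolding deg_def by simp
  qed
  have lapy: "laplacian w m g y0 \<le> lam * K * \<delta> * deg y0"
  proof -
    let ?N = "{y. 0 < w y0 y}"
    have "laplacian w m g y0 \<le> (\<Sum>y\<in>?N. qrate w m y0 y * ((1 + lam) * (f y - f y0) + lam * K * \<delta>))"
      unfolding laplacian_def
    proof (rule sum_mono)
      fix y assume yN: "y \<in> ?N"
      then have yB: "y \<in> B1" and yne: "y \<noteq> y0" using G unfolding B1_def weighted_graph_def by auto
      have "g y - g y0 \<le> (1 + lam) * (f y - f y0) + lam * K * \<delta>"
        using upy[OF yB] yne gy0 unfolding gy_def by (simp add: algebra_simps)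
      then show "qrate w m y0 y * (g y - g y0) \<le> qrate w m y0 y * ((1 + lam) * (f y - f y0) + lam * K * \<delta>)"
        using qrnn by (intro mult_left_mono) auto
    qed
    also have "\<dots> = (\<Sum>y\<in>?N. (1 + lam) * (qrate w m y0 y * (f y - f y0)) + lam * K * \<delta> * qrate w m y0 y)"
      by (intro sum.cong) (auto simp: algebra_simps)
    also have "\<dots> = (1 + lam) * (\<Sum>y\<in>?N. qrate w m y0 y * (f y - f y0)) + lam * K * \<delta> * (\<Sum>y\<in>?N. qrate w m y0 y)"
      by (simp only: sum.distrib sum_distrib_left)
    also have "\<dots> = lam * K * \<delta> * deg y0"
      using harm unfolding laplacian_def deg_def by simp
    finally show ?thesis .
  qed
  have a1: "lam * qrate w m x0 x2 - lam * K * \<delta> * deg x0 \<le> lam * K * \<delta> * deg y0"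
    using lapx lapy curvg by linarith
  have a2: "lam * (K * \<delta> * (deg x0 + deg y0)) = lam * K * \<delta> * deg x0 + lam * K * \<delta> * deg y0"
    by (simp add: algebra_simps)
  have "lam * qrate w m x0 x2 \<le> lam * (K * \<delta> * (deg x0 + deg y0))" using a1 a2 by linarith
  then have a3: "qrate w m x0 x2 \<le> K * \<delta> * (deg x0 + deg y0)" using lpos by simp
  have "K * \<delta> * (deg x0 + deg y0) \<le> K * \<delta> * (2 * D)"
    using degD[of x0] degD[of y0] Kd by (intro mult_left_mono) auto
  moreover have "K * \<delta> * (2 * D) \<le> 4/5 * q"
  proof -
    have "K * \<delta> * (2 * D) * E = (K * E) * (2 * D * \<delta>)" by (simp add: algebra_simps)
    also have "\<dots> = 8 * D * \<delta>" using KE by simp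
    also have "\<dots> \<le> 8 * D * \<epsilon>" using de Dpos by simp
    also have "\<dots> = 4/5 * q * E" unfolding E_def using qpos by (simp add: field_simps)
    finally show ?thesis using Epos by simp
  qed
  ultimately show False using a3 qx2 qpos by linarith
qed
end
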